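(* Let $a\in C^2([0,T]\times[-\pi,\pi])$ solve $$\partial_t a+\Big(\int_{-\pi}^x a(t,\bar x)\,d\bar x\Big)\partial_x a-a^2+\frac1\pi\int_{-\pi}^{\pi}a^2\,dx=0,\qquad \int_{-\pi}^\pi a(t,x)dx=0,$$ and set $a_0=a(0,\cdot)$. Assume $a_0$ attains its maximum at an interior point $x_0^*\in(-\pi,\pi)$. Then for all $t\in[0,T]$, $x\mapsto a(t,x)$ attains its maximum at $x^*(t)$, the characteristic starting from $x_0^*$, and moreover $\partial_xa(t,x^*(t))=0$ and $\partial_x^2a(t,x^*(t))=\partial_x^2a_0(x_0^* )$.
   Context: The characteristic starting from $x_0^*$ is the solution of $\frac{d}{dt}x^*(t)=\int_{-\pi}^{x^*(t)}a(t,x)\,dx$, $x^*(0)=x_0^*$. *)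

theory Defs
  imports "HOL-Analysis.Analysis"
begin

definition rect :: "real \<Rightarrow> (real \<times> real) set" where
  "rect T = {0..T} \<times> {-pi..pi}"

definition C2_rect ::
  "real \<Rightarrow> (real \<Rightarrow> real \<Rightarrow> real) \<Rightarrow> (real \<Rightarrow> real \<Rightarrow> real) \<Rightarrow> (real \<Rightarrow> real \<Rightarrow> real)
    \<Rightarrow> (real \<Rightarrow> real \<Rightarrow> real) \<Rightarrow> (real \<Rightarrow> real \<Rightarrow> real) \<Rightarrow> (real \<Rightarrow> real \<Rightarrow> real)
    \<Rightarrow> (real \<Rightarrow> real \<Rightarrow> real) \<Rightarrow> bool" where
  "C2_rect T a a_at a_ax a_att a_atx a_axt a_axx \<longleftrightarrow>
     (\<forall>t\<in>{0..T}. \<forall>x\<in>{-pi..pi}.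
        ((\<lambda>s. a s x) has_real_derivative a_at t x) (at t within {0..T}) \<and>
        ((\<lambda>y. a t y) has_real_derivative a_ax t x) (at x within {-pi..pi}) \<and>
        ((\<lambda>s. a_at s x) has_real_derivative a_att t x) (at t within {0..T}) \<and>
        ((\<lambda>y. a_at t y) has_real_derivative a_atx t x) (at x within {-pi..pi}) \<and>
        ((\<lambda>s. a_ax s x) has_real_derivative a_axt t x) (at t within {0..T}) \<and>
        ((\<lambda>y. a_ax t y) has_real_derivative a_axx t x) (at x within {-pi..pi})) \<and>
     continuous_on (rect T) (\<lambda>(t,x). a t x) \<and>
     continuous_on (rect T) (\<lambda>(t,x). a_at t x) \<and>
     continuous_on (rect T) (\<lambda>(t,x). a_ax t x) \<and>
     continuous_on (rect T) (\<lambda>(t,x). a_att t x) \<and>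
     continuous_on (rect T) (\<lambda>(t,x). a_atx t x) \<and>
     continuous_on (rect T) (\<lambda>(t,x). a_axt t x) \<and>
     continuous_on (rect T) (\<lambda>(t,x). a_axx t x)"

end

theory Submission
  imports Defs "HOL-Analysis.Analysis"
begin

lemma compact_rect: "compact (rect T)"
  unfolding rect_def by (intro compact_Times compact_Icc)

lemma unif_x:
  fixes f :: "real \<Rightarrow> real \<Rightarrow> real"
  assumes "continuous_on (rect T) (\<lambda>(t,x). f t x)" "e > 0"
  shows "\<exists>d>0. \<forall>t\<in>{0..T}. \<forall>x\<in>{-pi..pi}. \<forall>y\<in>{-pi..pi}. \<bar>x - y\<bar> < d \<longrightarrow> \<bar>f t x - f t y\<bar> < e"
proof -
  have "uniformly_continuous_on (rect T) (\<lambda>(t,x). f t x)"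
    using compact_uniformly_continuous[OF assms(1) compact_rect] .
  then obtain d where d: "d > 0" "\<forall>p\<in>rect T. \<forall>p'\<in>rect T. dist p' p < d \<longrightarrow> dist ((\<lambda>(t,x). f t x) p') ((\<lambda>(t,x). f t x) p) < e"
    using assms(2) unfolding uniformly_continuous_on_def by blast
  show ?thesis
  proof (intro exI[of _ d] conjI ballI impI)
    fix t x y assume "t \<in> {0..T}" "x \<in> {-pi..pi}" "y \<in> {-pi..pi}" "\<bar>x - y\<bar> < d"
    then have "dist (t,x) (t,y) < d" by (simp add: dist_Pair_Pair dist_real_def)
    with d(2) \<open>t \<in> _\<close> \<open>x \<in> _\<close> \<open>y \<in> _\<close> show "\<bar>f t x - f t y\<bar> < e"
      unfolding rect_def by (auto simp: dist_real_def)
  qed (use d in auto)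
qed

lemma unif_t:
  fixes f :: "real \<Rightarrow> real \<Rightarrow> real"
  assumes "continuous_on (rect T) (\<lambda>(t,x). f t x)" "e > 0"
  shows "\<exists>d>0. \<forall>t\<in>{0..T}. \<forall>s\<in>{0..T}. \<forall>x\<in>{-pi..pi}. \<bar>t - s\<bar> < d \<longrightarrow> \<bar>f t x - f s x\<bar> < e"
proof -
  have "uniformly_continuous_on (rect T) (\<lambda>(t,x). f t x)"
    using compact_uniformly_continuous[OF assms(1) compact_rect] .
  then obtain d where d: "d > 0" "\<forall>p\<in>rect T. \<forall>p'\<in>rect T. dist p' p < d \<longrightarrow> dist ((\<lambda>(t,x). f t x) p') ((\<lambda>(t,x). f t x) p) < e"
    using assms(2) unfolding uniformly_continuous_on_def by blast
  show ?thesis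
  proof (intro exI[of _ d] conjI ballI impI)
    fix t s x assume "t \<in> {0..T}" "s \<in> {0..T}" "x \<in> {-pi..pi}" "\<bar>t - s\<bar> < d"
    then have "dist (t,x) (s,x) < d" by (simp add: dist_Pair_Pair dist_real_def)
    with d(2) \<open>t \<in> _\<close> \<open>s \<in> _\<close> \<open>x \<in> _\<close> show "\<bar>f t x - f s x\<bar> < e"
      unfolding rect_def by (auto simp: dist_real_def)
  qed (use d in auto)
qed

lemma bound_rect:
  fixes f :: "real \<Rightarrow> real \<Rightarrow> real"
  assumes "continuous_on (rect T) (\<lambda>(t,x). f t x)"
  shows "\<exists>B. \<forall>t\<in>{0..T}. \<forall>x\<in>{-pi..pi}. \<bar>f t x\<bar> \<le> B"
proof -
  have "compact ((\<lambda>(t,x). f t x) ` rect T)"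
    by (rule compact_continuous_image[OF assms compact_rect])
  then obtain B where "\<forall>y\<in>(\<lambda>(t,x). f t x) ` rect T. norm y \<le> B"
    using compact_imp_bounded bounded_iff by metis
  then show ?thesis unfolding rect_def by force
qed

lemma cont_slice:
  fixes f :: "real \<Rightarrow> real \<Rightarrow> real"
  assumes "continuous_on (rect T) (\<lambda>(t,x). f t x)" "t \<in> {0..T}"
  shows "continuous_on {-pi..pi} (f t)"
proof -
  have "continuous_on {-pi..pi} ((\<lambda>(t,x). f t x) \<circ> (\<lambda>x. (t,x)))"
    by (rule continuous_on_compose[OF _ continuous_on_subset[OF assms(1)]])
      (use assms(2) in \<open>auto simp: rect_def intro!: continuous_intros\<close>)
  then show ?thesis by (simp add: o_def)
qed

lemma chain_rect:
  fixes f ft fx :: "real \<Rightarrow> real \<Rightarrow> real" and y :: "real \<Rightarrow> real"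
  assumes dt: "\<And>t x. t \<in> {0..T} \<Longrightarrow> x \<in> {-pi..pi} \<Longrightarrow> ((\<lambda>s. f s x) has_real_derivative ft t x) (at t within {0..T})"
    and dx: "\<And>t x. t \<in> {0..T} \<Longrightarrow> x \<in> {-pi..pi} \<Longrightarrow> ((\<lambda>z. f t z) has_real_derivative fx t x) (at x within {-pi..pi})"
    and cx: "continuous_on (rect T) (\<lambda>(t,x). fx t x)"
    and tau: "\<tau> \<in> {0..T}"
    and dy: "(y has_real_derivative y') (at \<tau> within {0..T})"
    and ry: "y ` {0..T} \<subseteq> {-pi..pi}"
  shows "((\<lambda>s. f s (y s)) has_real_derivative (ft \<tau> (y \<tau>) + fx \<tau> (y \<tau>) * y')) (at \<tau> within {0..T})"
proof -
  have D: "((\<lambda>(t,x). f t x) has_derivative (\<lambda>(ht, hx). ht * ft t x + blinfun_mult_right (fx t x) hx))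
      (at (t,x) within {0..T} \<times> {-pi..pi})" if "(t,x) \<in> rect T" for t x
  proof (rule has_derivative_partialsI)
    show "((\<lambda>s. f s x) has_derivative (\<lambda>ht. ht * ft t x)) (at t within {0..T})"
      using dt[of t x] that unfolding rect_def has_field_derivative_def by (simp add: mult.commute[of _ "ft t x"])
    show "((\<lambda>z. f t' z) has_derivative blinfun_apply (blinfun_mult_right (fx t' z))) (at z within {-pi..pi})"
      if "t' \<in> {0..T}" "z \<in> {-pi..pi}" for t' z
      using dx[OF that] unfolding has_field_derivative_def by simp
    have "continuous_on (rect T) (\<lambda>(t,x). blinfun_mult_right (fx t x))"
      unfolding case_prod_beta
      by (intro continuous_on_compose2[OF _ cx] bounded_linear.continuous_on[OF bounded_linear_blinfun_mult_right] continuous_on_id)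
         (use cx in \<open>auto simp: case_prod_beta\<close>)
    then show "continuous (at (t, x) within {0..T} \<times> {-pi..pi}) (\<lambda>(t, x). blinfun_mult_right (fx t x))"
      using that unfolding rect_def continuous_on_eq_continuous_within by auto
  qed (use that in \<open>auto simp: rect_def\<close>)
  have Dy: "((\<lambda>s. (s, y s)) has_derivative (\<lambda>h. (h, h * y'))) (at \<tau> within {0..T})"
    using dy unfolding has_field_derivative_def by (auto intro!: derivative_eq_intros simp: mult.commute)
  define G where "G = (\<lambda>p::real\<times>real. (\<lambda>(ht::real, hx::real). ht * ft (fst p) (snd p) + blinfun_mult_right (fx (fst p) (snd p)) hx))"
  have D': "((\<lambda>(t,x). f t x) has_derivative G p) (at p within rect T)" if "p \<in> rect T" for p
    using D[of "fst p" "snd p"] that unfolding G_def rect_def by auto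
  have "((\<lambda>s. (\<lambda>(t,x). f t x) ((\<lambda>s. (s, y s)) s)) has_derivative (\<lambda>h. G ((\<lambda>s. (s, y s)) \<tau>) ((\<lambda>h. (h, h * y')) h))) (at \<tau> within {0..T})"
    by (rule has_derivative_in_compose2[OF D' _ tau Dy]) (use ry in \<open>auto simp: rect_def image_subset_iff\<close>)
  then have "((\<lambda>s. f s (y s)) has_derivative (\<lambda>h. h * ft \<tau> (y \<tau>) + fx \<tau> (y \<tau>) * (h * y'))) (at \<tau> within {0..T})"
    unfolding G_def by simp
  moreover have "(\<lambda>h. h * ft \<tau> (y \<tau>) + fx \<tau> (y \<tau>) * (h * y')) = (*) (ft \<tau> (y \<tau>) + fx \<tau> (y \<tau>) * y')"
    by (auto simp: algebra_simps)
  ultimately show ?thesis unfolding has_field_derivative_def by simp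
qed

lemma fermat_int:
  fixes g :: "real \<Rightarrow> real"
  assumes "(g has_real_derivative g') (at x within {-pi..pi})" "x \<in> {-pi<..<pi}" "\<forall>y\<in>{-pi..pi}. g y \<le> g x"
  shows "g' = 0"
proof -
  have "x \<in> interior {-pi..pi}" using assms(2) by simp
  then have D: "(g has_real_derivative g') (at x)" using assms(1) at_within_interior by metis
  show ?thesis
  proof (rule DERIV_local_max[OF D])
    show "0 < min (pi - x) (x + pi)" using assms(2) by auto
    show "\<forall>y. \<bar>x - y\<bar> < min (pi - x) (x + pi) \<longrightarrow> g y \<le> g x"
    proof (intro allI impI)
      fix y assume "\<bar>x - y\<bar> < min (pi - x) (x + pi)"
      then have "y \<in> {-pi..pi}" by (auto simp: abs_less_iff)
      then show "g y \<le> g x" using assms(3) by blast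
    qed
  qed
qed

lemma mvt_real:
  fixes f :: "real \<Rightarrow> real"
  assumes "a \<le> b" "\<And>x. x \<in> {a..b} \<Longrightarrow> (f has_real_derivative f' x) (at x within {a..b})"
  shows "\<exists>\<xi>\<in>{a..b}. f b - f a = f' \<xi> * (b - a)"
proof -
  have "\<exists>x\<in>{a..b}. f b - f a = (\<lambda>h. f' x * h) (b - a)"
    by (rule mvt_very_simple[OF assms(1)]) (use assms(2) in \<open>auto simp: has_field_derivative_def\<close>)
  then show ?thesis by (auto simp: mult.commute)
qed

lemma dini_zero:
  fixes d :: "real \<Rightarrow> real"
  assumes cont: "continuous_on {0..T} d" and d0: "d 0 \<le> 0" and C: "C \<ge> 0"
    and nonneg: "\<forall>t\<in>{0..T}. d t \<ge> 0"
    and step: "\<And>t e. t \<in> {0..<T} \<Longrightarrow> e > 0 \<Longrightarrow> \<exists>\<delta>>0. \<forall>h. 0 < h \<and> h < \<delta> \<and> t + h \<le> T \<longrightarrow> d (t+h) \<le> d t + h * (C * d t + e)"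
  shows "\<forall>t\<in>{0..T}. d t \<le> 0"
proof -
  have main: "d t1 \<le> \<eta> * exp ((C+1) * t1)" if eta: "\<eta> > 0" and t1: "t1 \<in> {0..T}" for \<eta> t1
  proof (rule ccontr)
    assume "\<not> ?thesis"
    define \<phi> where "\<phi> t = \<eta> * exp ((C+1) * t)" for t
    define U where "U = {t\<in>{0..T}. d t > \<phi> t}"
    define ts where "ts = Inf U"
    have t1U: "t1 \<in> U" using \<open>\<not> _\<close> t1 unfolding U_def \<phi>_def by auto
    have bdd: "bdd_below U" unfolding U_def by (rule bdd_belowI[of _ 0]) auto
    have lower: "ts \<le> u" if "u \<in> U" for u unfolding ts_def by (rule cInf_lower[OF that bdd])
    have ts0: "ts \<ge> 0" unfolding ts_def by (rule cInf_greatest) (use t1U U_def in auto)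
    have tst1: "ts \<le> t1" using lower[OF t1U] .
    have phipos: "\<phi> t > 0" for t unfolding \<phi>_def using eta by simp
    have T0: "0 \<le> T" using t1 by auto
    have tsU: "ts \<notin> U"
    proof
      assume tsU: "ts \<in> U"
      have ts_pos: "ts > 0"
      proof (rule ccontr)
        assume "\<not> ts > 0" then have "ts = 0" using ts0 by auto
        then show False using tsU d0 phipos[of 0] unfolding U_def by auto
      qed
      have cphi: "continuous_on {0..T} (\<lambda>t. d t - \<phi> t)"
        unfolding \<phi>_def by (intro continuous_intros cont)
      have tsT: "ts \<in> {0..T}" using tsU U_def by auto
      have pos: "d ts - \<phi> ts > 0" using tsU unfolding U_def by auto
      obtain e where e: "e > 0" "\<forall>x'\<in>{0..T}. dist x' ts < e \<longrightarrow> dist (d x' - \<phi> x') (d ts - \<phi> ts) < d ts - \<phi> ts"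
        using cphi[unfolded continuous_on_iff, rule_format, OF tsT pos] by blast
      define s where "s = ts - min e ts / 2"
      have sT: "s \<in> {0..T}" using tsT ts_pos e(1) unfolding s_def by auto
      have "dist s ts < e" using e(1) ts_pos unfolding s_def dist_real_def by auto
      with e(2) sT have "dist (d s - \<phi> s) (d ts - \<phi> ts) < d ts - \<phi> ts" by auto
      then have "d s > \<phi> s" unfolding dist_real_def by auto
      then have "s \<in> U" using sT unfolding U_def by auto
      then have "ts \<le> s" by (rule lower)
      then show False using e(1) ts_pos unfolding s_def by auto
    qed
    have tsT: "ts \<in> {0..<T}"
    proof -
      have "ts \<noteq> t1" using tsU t1U by auto
      then show ?thesis using ts0 tst1 t1 by auto
    qed
    have dts: "d ts \<le> \<phi> ts" using tsU tsT unfolding U_def by auto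
    have dts0: "d ts \<ge> 0" using nonneg tsT by auto
    obtain \<delta> where \<delta>: "\<delta> > 0" "\<forall>h. 0 < h \<and> h < \<delta> \<and> ts + h \<le> T \<longrightarrow> d (ts+h) \<le> d ts + h * (C * d ts + \<eta>)"
      using step[OF tsT eta] by blast
    have far: "u \<ge> ts + \<delta>" if uU: "u \<in> U" for u
    proof (rule ccontr)
      assume nu: "\<not> u \<ge> ts + \<delta>"
      have "u \<noteq> ts" using uU tsU by auto
      moreover have "ts \<le> u" by (rule lower[OF uU])
      moreover have "u \<le> T" using uU unfolding U_def by simp
      ultimately have h: "0 < u - ts" "u - ts < \<delta>" "ts + (u - ts) \<le> T" using nu by auto
      have "d (ts + (u - ts)) \<le> d ts + (u - ts) * (C * d ts + \<eta>)" using \<delta>(2) h by blast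
      then have "d u \<le> d ts + (u - ts) * (C * d ts + \<eta>)" by simp
      also have "\<dots> \<le> \<phi> ts + (u - ts) * (C * \<phi> ts + \<phi> ts)"
      proof -
        have "\<eta> \<le> \<phi> ts" unfolding \<phi>_def using eta ts0 C by simp
        moreover have "C * d ts \<le> C * \<phi> ts" using dts C by (simp add: mult_left_mono)
        ultimately show ?thesis using dts h(1) by (simp add: add_mono mult_left_mono)
      qed
      also have "\<dots> = \<phi> ts * (1 + (C+1) * (u - ts))" by (simp add: algebra_simps)
      also have "\<dots> \<le> \<phi> ts * exp ((C+1) * (u - ts))"
        using phipos[of ts] exp_ge_add_one_self[of "(C+1) * (u - ts)"] by (simp add: mult_left_mono)
      also have "\<dots> = \<phi> u" unfolding \<phi>_def by (simp add: algebra_simps flip: exp_add)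
      finally have "d u \<le> \<phi> u" .
      then show False using uU unfolding U_def by auto
    qed
    have "ts + \<delta> \<le> ts" unfolding ts_def[symmetric, of] 
      by (subst (2) ts_def, rule cInf_greatest) (use t1U far in auto)
    then show False using \<delta>(1) by auto
  qed
  show ?thesis
  proof
    fix t assume t: "t \<in> {0..T}"
    show "d t \<le> 0"
    proof (rule ccontr)
      assume "\<not> d t \<le> 0"
      define \<eta> where "\<eta> = d t / (2 * exp ((C+1) * t))"
      have "\<eta> > 0" using \<open>\<not> _\<close> unfolding \<eta>_def by auto
      from main[OF this t] have "d t \<le> d t / 2" unfolding \<eta>_def by simp
      then show False using \<open>\<not> _\<close> by auto
    qed
  qed
qed

lemma int_bound:
  fixes g :: "real \<Rightarrow> real"
  assumes "continuous_on {-pi..pi} g" "\<forall>x\<in>{-pi..pi}. \<bar>g x\<bar> \<le> K" "-pi \<le> c" "c \<le> d" "d \<le> pi"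
  shows "\<bar>integral {c..d} g\<bar> \<le> K * (d - c)"
  using integral_bound[of c d g K] assms continuous_on_subset[OF assms(1), of "{c..d}"] by auto

lemma int_split:
  fixes g :: "real \<Rightarrow> real"
  assumes "continuous_on {-pi..pi} g" "-pi \<le> c" "c \<le> pi"
  shows "integral {-pi..c} g + integral {c..pi} g = integral {-pi..pi} g"
  using Henstock_Kurzweil_Integration.integral_combine[where a="-pi" and c=c and b=pi and f=g] assms integrable_continuous_real by auto

lemma stay_inside:
  fixes a :: "real \<Rightarrow> real \<Rightarrow> real" and xs :: "real \<Rightarrow> real"
  assumes cxs: "continuous_on {0..T} xs"
    and Ka: "\<forall>t\<in>{0..T}. \<forall>x\<in>{-pi..pi}. \<bar>a t x\<bar> \<le> K"
    and ca: "\<And>t. t \<in> {0..T} \<Longrightarrow> continuous_on {-pi..pi} (a t)"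
    and mean0: "\<forall>t\<in>{0..T}. integral {-pi..pi} (a t) = 0"
    and x0: "x0 \<in> {-pi<..<pi}"
    and char: "\<forall>t\<in>{0..T}. (xs has_real_derivative integral {-pi..xs t} (a t)) (at t within {0..T})"
    and char0: "xs 0 = x0"
  shows "\<forall>t\<in>{0..T}. xs t \<in> {-pi<..<pi}"
proof (rule ccontr)
  assume "\<not> ?thesis"
  then obtain t2 where t2: "t2 \<in> {0..T}" "xs t2 \<notin> {-pi<..<pi}" by blast
  have reach: "\<exists>s'\<in>{0..s}. xs s' = pi \<or> xs s' = -pi" if s: "s \<in> {0..T}" "xs s \<notin> {-pi<..<pi}" for s
  proof -
    have c: "continuous_on {0..s} xs" using continuous_on_subset[OF cxs] s by auto
    show ?thesis
    proof (cases "xs s \<ge> pi")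
      case True
      then obtain s' where "0 \<le> s'" "s' \<le> s" "xs s' = pi"
        using IVT'[of xs 0 pi s] c x0 char0 s by auto
      then show ?thesis by auto
    next
      case False
      then have "xs s \<le> -pi" using s by auto
      then obtain s' where "0 \<le> s'" "s' \<le> s" "xs s' = -pi"
        using IVT2'[of xs s "-pi" 0] c x0 char0 s by auto
      then show ?thesis by auto
    qed
  qed
  define U where "U = {0..T} \<inter> xs -` {pi, -pi}"
  have Ucl: "closed U" unfolding U_def by (rule continuous_closed_preimage[OF cxs]) auto
  have Une: "U \<noteq> {}"
  proof -
    obtain s' where s': "s' \<in> {0..t2}" "xs s' = pi \<or> xs s' = -pi" using reach[OF t2] by blast
    then have "s' \<in> U" using t2 unfolding U_def by auto
    then show ?thesis by auto
  qed
  have Ubdd: "bdd_below U" unfolding U_def by (rule bdd_belowI[of _ 0]) auto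
  define t1 where "t1 = Inf U"
  have t1U: "t1 \<in> U" unfolding t1_def by (rule closed_contains_Inf[OF Une Ubdd Ucl])
  have t1low: "t1 \<le> u" if "u \<in> U" for u unfolding t1_def by (rule cInf_lower[OF that Ubdd])
  have t1T: "t1 \<in> {0..T}" using t1U U_def by auto
  have t1pos: "t1 > 0"
  proof (rule ccontr)
    assume "\<not> t1 > 0" then have "t1 = 0" using t1T by auto
    then show False using t1U char0 x0 unfolding U_def by auto
  qed
  have inside: "xs s \<in> {-pi..pi}" if "s \<in> {0..t1}" for s
  proof (rule ccontr)
    assume nin: "xs s \<notin> {-pi..pi}"
    have sT: "s \<in> {0..T}" using that t1T by auto
    obtain s' where s': "s' \<in> {0..s}" "xs s' = pi \<or> xs s' = -pi" using reach[OF sT] nin by auto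
    then have "s' \<in> U" using sT unfolding U_def by auto
    then have "t1 \<le> s'" by (rule t1low)
    then have "s = t1" using s' that by auto
    then show False using nin t1U unfolding U_def by auto
  qed
  have dxs: "(xs has_real_derivative integral {-pi..xs t} (a t)) (at t within {0..t1})" if "t \<in> {0..t1}" for t
    by (rule DERIV_subset[where s="{0..T}"]) (use char that t1T in auto)
  have ints: "integral {-pi..xs t} (a t) + integral {xs t..pi} (a t) = 0" if "t \<in> {0..t1}" for t
    using int_split[OF ca, of t "xs t"] inside[OF that] mean0 that t1T by auto
  have bnd1: "\<bar>integral {-pi..xs t} (a t)\<bar> \<le> K * (xs t + pi)" if "t \<in> {0..t1}" for t
    using int_bound[OF ca, of t K "-pi" "xs t"] inside[OF that] Ka that t1T by auto
  have bnd2: "\<bar>integral {xs t..pi} (a t)\<bar> \<le> K * (pi - xs t)" if "t \<in> {0..t1}" for t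
    using int_bound[OF ca, of t K "xs t" pi] inside[OF that] Ka that t1T by auto
  from t1U have "xs t1 = pi \<or> xs t1 = -pi" unfolding U_def by auto
  then show False
  proof
    assume top: "xs t1 = pi"
    define g where "g t = (pi - xs t) * exp (K * t)" for t
    define g' where "g' t = (- integral {-pi..xs t} (a t)) * exp (K * t) + (pi - xs t) * (exp (K * t) * K)" for t
    have "\<exists>\<xi>\<in>{0..t1}. g t1 - g 0 = g' \<xi> * (t1 - 0)"
    proof (rule mvt_real)
      fix t assume t: "t \<in> {0..t1}"
      show "(g has_real_derivative g' t) (at t within {0..t1})"
        unfolding g_def g'_def
        by (rule derivative_eq_intros dxs[OF t] refl | simp)+
    qed (use t1pos in auto)
    then obtain \<xi> where \<xi>: "\<xi> \<in> {0..t1}" "g t1 - g 0 = g' \<xi> * t1" by auto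
    have "g' \<xi> \<ge> 0"
    proof -
      have "- integral {-pi..xs \<xi>} (a \<xi>) + (pi - xs \<xi>) * K \<ge> 0"
      proof -
        have "integral {xs \<xi>..pi} (a \<xi>) \<ge> - (K * (pi - xs \<xi>))" using bnd2[OF \<xi>(1)] by (simp only: abs_le_iff) linarith
        moreover have "(pi - xs \<xi>) * K = K * (pi - xs \<xi>)" by (rule mult.commute)
        ultimately show ?thesis using ints[OF \<xi>(1)] by linarith
      qed
      moreover have "g' \<xi> = (- integral {-pi..xs \<xi>} (a \<xi>) + (pi - xs \<xi>) * K) * exp (K * \<xi>)"
        unfolding g'_def by (simp add: algebra_simps)
      ultimately show ?thesis by simp

    qed
    then have "g t1 - g 0 \<ge> 0" using \<xi>(2) t1pos by simp
    moreover have "g t1 = 0" unfolding g_def using top by simp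
    moreover have "g 0 > 0" unfolding g_def using char0 x0 by simp
    ultimately show False by simp
  next
    assume bot: "xs t1 = -pi"
    define g where "g t = (xs t + pi) * exp (K * t)" for t
    define g' where "g' t = (integral {-pi..xs t} (a t)) * exp (K * t) + (xs t + pi) * (exp (K * t) * K)" for t
    have "\<exists>\<xi>\<in>{0..t1}. g t1 - g 0 = g' \<xi> * (t1 - 0)"
    proof (rule mvt_real)
      fix t assume t: "t \<in> {0..t1}"
      show "(g has_real_derivative g' t) (at t within {0..t1})"
        unfolding g_def g'_def
        by (rule derivative_eq_intros dxs[OF t] refl | simp)+
    qed (use t1pos in auto)
    then obtain \<xi> where \<xi>: "\<xi> \<in> {0..t1}" "g t1 - g 0 = g' \<xi> * t1" by auto
    have "g' \<xi> \<ge> 0"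
    proof -
      have "integral {-pi..xs \<xi>} (a \<xi>) + (xs \<xi> + pi) * K \<ge> 0"
      proof -
        have "integral {-pi..xs \<xi>} (a \<xi>) \<ge> - (K * (xs \<xi> + pi))" using bnd1[OF \<xi>(1)] by (simp only: abs_le_iff) linarith
        moreover have "(xs \<xi> + pi) * K = K * (xs \<xi> + pi)" by (rule mult.commute)
        ultimately show ?thesis by linarith
      qed
      moreover have "g' \<xi> = (integral {-pi..xs \<xi>} (a \<xi>) + (xs \<xi> + pi) * K) * exp (K * \<xi>)"
        unfolding g'_def by (simp add: algebra_simps)
      ultimately show ?thesis by simp

    qed
    then have "g t1 - g 0 \<ge> 0" using \<xi>(2) t1pos by simp
    moreover have "g t1 = 0" unfolding g_def using bot by simp
    moreover have "g 0 > 0" unfolding g_def using char0 x0 by simp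
    ultimately show False by simp
  qed
qed

lemma deriv_step:
  fixes f :: "real \<Rightarrow> real"
  assumes "(f has_real_derivative D) (at t within S)" "e > 0"
  shows "\<exists>\<delta>>0. \<forall>y\<in>S. \<bar>y - t\<bar> < \<delta> \<longrightarrow> \<bar>f y - f t - D * (y - t)\<bar> \<le> e * \<bar>y - t\<bar>"
proof -
  have "((\<lambda>y. (f y - f t) / (y - t)) \<longlongrightarrow> D) (at t within S)"
    using assms(1) has_field_derivative_iff by blast
  then have "\<forall>\<^sub>F y in at t within S. dist ((f y - f t) / (y - t)) D < e"
    using assms(2) tendstoD by blast
  then obtain \<delta> where \<delta>: "\<delta> > 0" "\<forall>y\<in>S. y \<noteq> t \<and> dist y t < \<delta> \<longrightarrow> dist ((f y - f t) / (y - t)) D < e"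
    unfolding eventually_at by blast
  show ?thesis
  proof (intro exI[of _ \<delta>] conjI ballI impI)
    fix y assume y: "y \<in> S" "\<bar>y - t\<bar> < \<delta>"
    show "\<bar>f y - f t - D * (y - t)\<bar> \<le> e * \<bar>y - t\<bar>"
    proof (cases "y = t")
      case True then show ?thesis by simp
    next
      case False
      then have "\<bar>(f y - f t) / (y - t) - D\<bar> < e" using \<delta>(2) y by (auto simp: dist_real_def)
      moreover have "f y - f t - D * (y - t) = ((f y - f t) / (y - t) - D) * (y - t)"
        using False by (simp add: field_simps)
      ultimately show ?thesis by (simp add: abs_mult mult_right_mono)
    qed
  qed (use \<delta> in auto)
qed

lemma mvt_sym:
  fixes f :: "real \<Rightarrow> real"
  assumes D: "\<And>x. x \<in> {c..d} \<Longrightarrow> (f has_real_derivative f' x) (at x within {c..d})"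
    and xy: "x \<in> {c..d}" "y \<in> {c..d}"
  shows "\<exists>\<zeta>. \<bar>\<zeta> - x\<bar> \<le> \<bar>y - x\<bar> \<and> \<zeta> \<in> {c..d} \<and> f y - f x = f' \<zeta> * (y - x)"
proof (cases "x \<le> y")
  case True
  have "\<exists>\<xi>\<in>{x..y}. f y - f x = f' \<xi> * (y - x)"
  proof (rule mvt_real[OF True])
    fix z assume "z \<in> {x..y}"
    then show "(f has_real_derivative f' z) (at z within {x..y})"
      using xy by (intro DERIV_subset[OF D]) auto
  qed
  then obtain \<xi> where "\<xi> \<in> {x..y}" "f y - f x = f' \<xi> * (y - x)" by blast
  then show ?thesis using xy by (intro exI[of _ \<xi>]) auto
next
  case False
  have "\<exists>\<xi>\<in>{y..x}. f x - f y = f' \<xi> * (x - y)"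
  proof (rule mvt_real)
    show "y \<le> x" using False by simp
    fix z assume "z \<in> {y..x}"
    then show "(f has_real_derivative f' z) (at z within {y..x})"
      using xy by (intro DERIV_subset[OF D]) auto
  qed
  then obtain \<xi> where "\<xi> \<in> {y..x}" "f x - f y = f' \<xi> * (x - y)" by blast
  then show ?thesis using xy False by (intro exI[of _ \<xi>]) (auto simp: algebra_simps)
qed

lemma abs5: fixes a b c d e :: real shows "\<bar>a + b - c - d - e\<bar> \<le> \<bar>a\<bar> + \<bar>b\<bar> + \<bar>c\<bar> + \<bar>d\<bar> + \<bar>e\<bar>"
  by (rule order.trans[OF abs_triangle_ineq4], rule add_right_mono, rule order.trans[OF abs_triangle_ineq4],
      rule add_right_mono, rule order.trans[OF abs_triangle_ineq4], rule add_right_mono, rule abs_triangle_ineq)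

lemma alg_bound:
  fixes e1 e2 e3 A q M h \<epsilon> Kq Km :: real
  assumes "\<bar>e1\<bar> \<le> \<epsilon> * \<bar>h\<bar>" "\<bar>e2\<bar> \<le> \<epsilon> * h^2" "\<bar>e3\<bar> \<le> \<epsilon> * \<bar>h\<bar>" "\<bar>A\<bar> \<le> \<epsilon>"
    and "A = q * h^2 / 2 + e2" "\<bar>q\<bar> \<le> Kq" "\<bar>M\<bar> \<le> Km" "0 \<le> \<epsilon>" "\<epsilon> \<le> 1"
  shows "\<bar>A * (A + 2 * M) - (q * h + e1) * (M * h + e3)\<bar> \<le> \<epsilon> * h^2 * (2 * Kq + 3 * Km + 2)"
proof -
  have eq: "A * (A + 2 * M) - (q * h + e1) * (M * h + e3) = (q * h^2 / 2) * A + e2 * (A + 2 * M) - (q * h) * e3 - e1 * (M * h) - e1 * e3"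
    using assms(5) by (simp add: algebra_simps power2_eq_square)
  have h2: "h^2 = \<bar>h\<bar> * \<bar>h\<bar>" by (simp add: power2_eq_square abs_mult[symmetric])
  have t1: "\<bar>(q * h^2 / 2) * A\<bar> \<le> \<epsilon> * h^2 * Kq"
  proof -
    have "\<bar>(q * h^2 / 2) * A\<bar> = \<bar>q\<bar> * h^2 / 2 * \<bar>A\<bar>" by (simp add: abs_mult)
    also have "\<dots> \<le> Kq * h^2 / 2 * \<epsilon>" using assms by (intro mult_mono divide_right_mono) auto
    also have "\<dots> \<le> \<epsilon> * h^2 * Kq" using assms by (simp add: algebra_simps mult_nonneg_nonneg)
    finally show ?thesis .
  qed
  have t2: "\<bar>e2 * (A + 2 * M)\<bar> \<le> \<epsilon> * h^2 * (1 + 2 * Km)"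
  proof -
    have "\<bar>A + 2 * M\<bar> \<le> 1 + 2 * Km" using assms by linarith
    then have "\<bar>e2\<bar> * \<bar>A + 2 * M\<bar> \<le> (\<epsilon> * h^2) * (1 + 2 * Km)"
      using assms(2) by (intro mult_mono) auto
    then show ?thesis by (simp add: abs_mult)
  qed
  have t3: "\<bar>(q * h) * e3\<bar> \<le> \<epsilon> * h^2 * Kq"
  proof -
    have "\<bar>q\<bar> * \<bar>h\<bar> * \<bar>e3\<bar> \<le> Kq * \<bar>h\<bar> * (\<epsilon> * \<bar>h\<bar>)"
      using assms by (intro mult_mono) auto
    then show ?thesis using h2 by (simp add: abs_mult algebra_simps)
  qed
  have t4: "\<bar>e1 * (M * h)\<bar> \<le> \<epsilon> * h^2 * Km"
  proof -
    have "\<bar>e1\<bar> * (\<bar>M\<bar> * \<bar>h\<bar>) \<le> (\<epsilon> * \<bar>h\<bar>) * (Km * \<bar>h\<bar>)"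
      using assms by (intro mult_mono) auto
    then show ?thesis using h2 by (simp add: abs_mult algebra_simps)
  qed
  have t5: "\<bar>e1 * e3\<bar> \<le> \<epsilon> * h^2"
  proof -
    have "\<bar>e1\<bar> * \<bar>e3\<bar> \<le> (\<epsilon> * \<bar>h\<bar>) * (\<epsilon> * \<bar>h\<bar>)"
      using assms by (intro mult_mono) auto
    also have "\<dots> = \<epsilon> * \<epsilon> * h^2" using h2 by simp
    also have "\<dots> \<le> \<epsilon> * h^2"
    proof -
      have "\<epsilon> * \<epsilon> \<le> \<epsilon> * 1" using assms(8,9) by (intro mult_left_mono) auto
      then show ?thesis by (intro mult_right_mono) auto
    qed
    finally show ?thesis by (simp add: abs_mult)
  qed
  have "\<bar>A * (A + 2 * M) - (q * h + e1) * (M * h + e3)\<bar> \<le> \<epsilon> * h^2 * Kq + \<epsilon> * h^2 * (1 + 2 * Km) + \<epsilon> * h^2 * Kq + \<epsilon> * h^2 * Km + \<epsilon> * h^2"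
    unfolding eq by (rule order.trans[OF abs5]) (intro add_mono t1 t2 t3 t4 t5)
  also have "\<dots> = \<epsilon> * h^2 * (2 * Kq + 3 * Km + 2)" by (simp add: algebra_simps)
  finally show ?thesis .
qed

locale csetting =
  fixes T x0 :: real
    and a a_at a_ax a_att a_atx a_axt a_axx :: "real \<Rightarrow> real \<Rightarrow> real"
    and xs :: "real \<Rightarrow> real"
  assumes T: "0 < T"
    and reg: "C2_rect T a a_at a_ax a_att a_atx a_axt a_axx"
    and pde: "\<forall>t\<in>{0..T}. \<forall>x\<in>{-pi..pi}.
                a_at t x + integral {-pi..x} (a t) * a_ax t x - (a t x)^2
                + (1/pi) * integral {-pi..pi} (\<lambda>y. (a t y)^2) = 0"
    and mean0: "\<forall>t\<in>{0..T}. integral {-pi..pi} (a t) = 0"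
    and x0: "x0 \<in> {-pi<..<pi}"
    and max0: "\<forall>x\<in>{-pi..pi}. a 0 x \<le> a 0 x0"
    and char: "\<forall>t\<in>{0..T}. (xs has_real_derivative integral {-pi..xs t} (a t)) (at t within {0..T})"
    and char0: "xs 0 = x0"

context csetting
begin

definition "vv t y = integral {-pi..y} (a t)"
definition "II t = (1/pi) * integral {-pi..pi} (\<lambda>y. (a t y)^2)"

lemma Dt: "t \<in> {0..T} \<Longrightarrow> x \<in> {-pi..pi} \<Longrightarrow> ((\<lambda>s. a s x) has_real_derivative a_at t x) (at t within {0..T})"
  using reg unfolding C2_rect_def by blast
lemma Dx: "t \<in> {0..T} \<Longrightarrow> x \<in> {-pi..pi} \<Longrightarrow> ((\<lambda>y. a t y) has_real_derivative a_ax t x) (at x within {-pi..pi})"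
  using reg unfolding C2_rect_def by blast
lemma Dxx: "t \<in> {0..T} \<Longrightarrow> x \<in> {-pi..pi} \<Longrightarrow> ((\<lambda>y. a_ax t y) has_real_derivative a_axx t x) (at x within {-pi..pi})"
  using reg unfolding C2_rect_def by blast
lemma ca: "continuous_on (rect T) (\<lambda>(t,x). a t x)" using reg unfolding C2_rect_def by blast
lemma cat: "continuous_on (rect T) (\<lambda>(t,x). a_at t x)" using reg unfolding C2_rect_def by blast
lemma cax: "continuous_on (rect T) (\<lambda>(t,x). a_ax t x)" using reg unfolding C2_rect_def by blast
lemma caxx: "continuous_on (rect T) (\<lambda>(t,x). a_axx t x)" using reg unfolding C2_rect_def by blast

lemma cslice: "t \<in> {0..T} \<Longrightarrow> continuous_on {-pi..pi} (a t)"
  by (rule cont_slice[OF ca])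

lemma Dv: "t \<in> {0..T} \<Longrightarrow> x \<in> {-pi..pi} \<Longrightarrow> (vv t has_real_derivative a t x) (at x within {-pi..pi})"
  unfolding vv_def[abs_def] by (rule integral_has_real_derivative[OF cslice])

lemma pde': "t \<in> {0..T} \<Longrightarrow> x \<in> {-pi..pi} \<Longrightarrow> a_at t x = (a t x)^2 - II t - vv t x * a_ax t x"
  using pde unfolding vv_def II_def by (auto simp: algebra_simps)

lemma v_lo: "vv t (-pi) = 0" unfolding vv_def by simp
lemma v_hi: "t \<in> {0..T} \<Longrightarrow> vv t pi = 0" unfolding vv_def using mean0 by simp

lemma cxs: "continuous_on {0..T} xs"
  unfolding continuous_on_eq_continuous_within
  using char DERIV_continuous by blast

lemma inside: "t \<in> {0..T} \<Longrightarrow> xs t \<in> {-pi<..<pi}"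
proof -
  obtain K where K: "\<forall>t\<in>{0..T}. \<forall>x\<in>{-pi..pi}. \<bar>a t x\<bar> \<le> K" using bound_rect[OF ca] by blast
  assume "t \<in> {0..T}"
  with stay_inside[OF cxs K cslice mean0 x0 char char0] show ?thesis by blast
qed

lemma Dm: "t \<in> {0..T} \<Longrightarrow> ((\<lambda>s. a s (xs s)) has_real_derivative (a t (xs t))^2 - II t) (at t within {0..T})"
proof -
  assume t: "t \<in> {0..T}"
  have xin: "xs s \<in> {-pi..pi}" if "s \<in> {0..T}" for s using inside[OF that] by auto
  have d: "(xs has_real_derivative vv t (xs t)) (at t within {0..T})"
    using char t unfolding vv_def by blast
  have "((\<lambda>s. a s (xs s)) has_real_derivative (a_at t (xs t) + a_ax t (xs t) * vv t (xs t))) (at t within {0..T})"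
    by (rule chain_rect[where f=a and ft=a_at and fx=a_ax, OF Dt Dx cax t d]) (use xin in auto)
  moreover have "a_at t (xs t) + a_ax t (xs t) * vv t (xs t) = (a t (xs t))^2 - II t"
    using pde'[OF t xin[OF t]] by (simp add: algebra_simps)
  ultimately show ?thesis by simp
qed

end

context csetting
begin

definition "Ka = (SOME K. \<forall>t\<in>{0..T}. \<forall>x\<in>{-pi..pi}. \<bar>a t x\<bar> \<le> K)"
definition "Kat = (SOME K. \<forall>t\<in>{0..T}. \<forall>x\<in>{-pi..pi}. \<bar>a_at t x\<bar> \<le> K)"
definition "Kaxx = (SOME K. \<forall>t\<in>{0..T}. \<forall>x\<in>{-pi..pi}. \<bar>a_axx t x\<bar> \<le> K)"

lemma Ka: "t \<in> {0..T} \<Longrightarrow> x \<in> {-pi..pi} \<Longrightarrow> \<bar>a t x\<bar> \<le> Ka"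
  using someI_ex[OF bound_rect[OF ca]] unfolding Ka_def by blast
lemma Kat: "t \<in> {0..T} \<Longrightarrow> x \<in> {-pi..pi} \<Longrightarrow> \<bar>a_at t x\<bar> \<le> Kat"
  using someI_ex[OF bound_rect[OF cat]] unfolding Kat_def by blast
lemma Kaxx: "t \<in> {0..T} \<Longrightarrow> x \<in> {-pi..pi} \<Longrightarrow> \<bar>a_axx t x\<bar> \<le> Kaxx"
  using someI_ex[OF bound_rect[OF caxx]] unfolding Kaxx_def by blast

lemma T0: "0 \<in> {0..T}" using T by simp
lemma X0: "(0::real) \<in> {-pi..pi}" by simp

lemma Kat_nonneg: "Kat \<ge> 0" using Kat[OF T0 X0] by linarith
lemma Ka_nonneg: "Ka \<ge> 0" using Ka[OF T0 X0] by linarith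

lemma argmax: "t \<in> {0..T} \<Longrightarrow> \<exists>y\<in>{-pi..pi}. \<forall>x\<in>{-pi..pi}. a t x \<le> a t y"
  using continuous_attains_sup[OF compact_Icc _ cslice] by auto

definition "MM t = Sup (a t ` {-pi..pi})"

lemma MM_att: "t \<in> {0..T} \<Longrightarrow> \<exists>y\<in>{-pi..pi}. a t y = MM t \<and> (\<forall>x\<in>{-pi..pi}. a t x \<le> a t y)"
proof -
  assume t: "t \<in> {0..T}"
  obtain y where y: "y \<in> {-pi..pi}" "\<forall>x\<in>{-pi..pi}. a t x \<le> a t y" using argmax[OF t] by blast
  have "Sup (a t ` {-pi..pi}) = a t y"
    by (rule cSup_eq_maximum) (use y in auto)
  then show ?thesis using y unfolding MM_def by auto
qed

lemma MM_ge: "t \<in> {0..T} \<Longrightarrow> x \<in> {-pi..pi} \<Longrightarrow> a t x \<le> MM t"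
  using MM_att by fastforce

lemma MM_bound: "t \<in> {0..T} \<Longrightarrow> \<bar>MM t\<bar> \<le> Ka"
  using MM_att Ka by fastforce

lemma lip: "t \<in> {0..T} \<Longrightarrow> s \<in> {0..T} \<Longrightarrow> x \<in> {-pi..pi} \<Longrightarrow> \<bar>a t x - a s x\<bar> \<le> Kat * \<bar>t - s\<bar>"
proof -
  assume t: "t \<in> {0..T}" and s: "s \<in> {0..T}" and x: "x \<in> {-pi..pi}"
  obtain \<zeta> where z: "\<zeta> \<in> {0..T}" "a t x - a s x = a_at \<zeta> x * (t - s)"
    using mvt_sym[where f="\<lambda>s. a s x" and f'="\<lambda>s. a_at s x" and c=0 and d=T, OF Dt[OF _ x] s t] by blast
  have "\<bar>a_at \<zeta> x * (t - s)\<bar> \<le> Kat * \<bar>t - s\<bar>"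
    unfolding abs_mult by (rule mult_right_mono[OF Kat[OF z(1) x]]) simp
  then show ?thesis using z by simp
qed

lemma at_argmax:
  assumes t: "t \<in> {0..T}" and y: "y \<in> {-pi..pi}" and mx: "\<forall>x\<in>{-pi..pi}. a t x \<le> a t y"
  shows "a_at t y = (a t y)^2 - II t"
proof -
  have "vv t y * a_ax t y = 0"
  proof (cases "y = -pi \<or> y = pi")
    case True then show ?thesis using v_lo v_hi[OF t] by auto
  next
    case False
    then have "y \<in> {-pi<..<pi}" using y by auto
    then have "a_ax t y = 0" using fermat_int[OF Dx[OF t y] _ mx] by blast
    then show ?thesis by simp
  qed
  then show ?thesis using pde'[OF t y] by simp
qed

lemma MM_lip: "t \<in> {0..T} \<Longrightarrow> s \<in> {0..T} \<Longrightarrow> MM t - MM s \<le> Kat * \<bar>t - s\<bar>"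
proof -
  assume t: "t \<in> {0..T}" and s: "s \<in> {0..T}"
  obtain y where y: "y \<in> {-pi..pi}" "a t y = MM t" using MM_att[OF t] by blast
  have "a t y - a s y \<le> Kat * \<bar>t - s\<bar>" using lip[OF t s y(1)] by linarith
  moreover have "a s y \<le> MM s" by (rule MM_ge[OF s y(1)])
  ultimately show ?thesis using y by linarith
qed

lemma cMM: "continuous_on {0..T} MM"
  unfolding continuous_on_iff
proof (intro ballI allI impI)
  fix t e :: real assume t: "t \<in> {0..T}" and e: "e > 0"
  show "\<exists>d>0. \<forall>x'\<in>{0..T}. dist x' t < d \<longrightarrow> dist (MM x') (MM t) < e"
  proof (intro exI[of _ "e / (Kat + 1)"] conjI ballI impI)
    show "0 < e / (Kat + 1)" using e Kat_nonneg by simp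
    fix s assume s: "s \<in> {0..T}" and d: "dist s t < e / (Kat + 1)"
    have "\<bar>s - t\<bar> * (Kat + 1) < e" using d Kat_nonneg by (simp add: dist_real_def field_simps)
    moreover have "Kat * \<bar>s - t\<bar> \<le> \<bar>s - t\<bar> * (Kat + 1)" by (simp add: algebra_simps)
    ultimately have "Kat * \<bar>s - t\<bar> < e" by linarith
    moreover have "MM s - MM t \<le> Kat * \<bar>s - t\<bar>" by (rule MM_lip[OF s t])
    moreover have "MM t - MM s \<le> Kat * \<bar>s - t\<bar>" using MM_lip[OF t s] by (simp add: abs_minus_commute)
    ultimately show "dist (MM s) (MM t) < e" unfolding dist_real_def by linarith
  qed
qed

end

context csetting
begin

lemma Mstep:
  assumes t: "t \<in> {0..<T}" and e: "e > 0"
  shows "\<exists>\<delta>>0. \<forall>h. 0 < h \<and> h < \<delta> \<and> t + h \<le> T \<longrightarrow> MM (t+h) \<le> MM t + h * ((MM t)^2 - II t + e)"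
proof -
  have tT: "t \<in> {0..T}" using t by auto
  obtain \<delta>1 where \<delta>1: "\<delta>1 > 0" "\<forall>\<tau>\<in>{0..T}. \<forall>s\<in>{0..T}. \<forall>x\<in>{-pi..pi}. \<bar>\<tau> - s\<bar> < \<delta>1 \<longrightarrow> \<bar>a_at \<tau> x - a_at s x\<bar> < e/2"
    using unif_t[OF cat, of "e/2"] e by auto
  define c where "c = (MM t)^2 - II t + e/2"
  have "\<exists>\<eta>>0. \<forall>y\<in>{-pi..pi}. a t y > MM t - \<eta> \<longrightarrow> a_at t y < c"
  proof -
    define K where "K = {-pi..pi} \<inter> (a_at t) -` {c..}"
    have Kcl: "closed K" unfolding K_def
      by (rule continuous_closed_preimage[OF cont_slice[OF cat tT]]) auto
    have Kc: "compact K"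
    proof -
      have "compact ({-pi..pi} \<inter> K)" by (rule compact_Int_closed[OF compact_Icc Kcl])
      moreover have "{-pi..pi} \<inter> K = K" unfolding K_def by auto
      ultimately show ?thesis by simp
    qed
    show ?thesis
    proof (cases "K = {}")
      case True
      show ?thesis
      proof (intro exI[of _ 1] conjI ballI impI)
        fix y assume "y \<in> {-pi..pi}"
        then have "y \<notin> K" using True by auto
        then show "a_at t y < c" using \<open>y \<in> _\<close> unfolding K_def by auto
      qed simp
    next
      case False
      have "continuous_on K (a t)" by (rule continuous_on_subset[OF cslice[OF tT]]) (auto simp: K_def)
      then obtain y1 where y1: "y1 \<in> K" "\<forall>y\<in>K. a t y \<le> a t y1"
        using continuous_attains_sup[OF Kc False] by blast
      have y1pi: "y1 \<in> {-pi..pi}" and y1c: "a_at t y1 \<ge> c" using y1(1) unfolding K_def by auto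
      have lt: "a t y1 < MM t"
      proof (rule ccontr)
        assume "\<not> a t y1 < MM t"
        then have eq: "a t y1 = MM t" using MM_ge[OF tT y1pi] by linarith
        then have "\<forall>x\<in>{-pi..pi}. a t x \<le> a t y1" using MM_ge[OF tT] by auto
        then have "a_at t y1 = (a t y1)^2 - II t" by (rule at_argmax[OF tT y1pi])
        then show False using y1c eq e unfolding c_def by simp
      qed
      show ?thesis
      proof (intro exI[of _ "MM t - a t y1"] conjI ballI impI)
        show "0 < MM t - a t y1" using lt by simp
        fix y assume y: "y \<in> {-pi..pi}" "MM t - (MM t - a t y1) < a t y"
        have "y \<notin> K"
        proof
          assume "y \<in> K" then have "a t y \<le> a t y1" using y1(2) by blast
          then show False using y(2) by simp
        qed
        then show "a_at t y < c" using y(1) unfolding K_def by auto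
      qed
    qed
  qed
  then obtain \<eta> where \<eta>: "\<eta> > 0" "\<forall>y\<in>{-pi..pi}. a t y > MM t - \<eta> \<longrightarrow> a_at t y < c" by blast
  define \<delta> where "\<delta> = min \<delta>1 (\<eta> / (2 * Kat + 1))"
  show ?thesis
  proof (intro exI[of _ \<delta>] conjI allI impI)
    show "\<delta> > 0" unfolding \<delta>_def using \<delta>1(1) \<eta>(1) Kat_nonneg by simp
    fix h assume h: "0 < h \<and> h < \<delta> \<and> t + h \<le> T"
    define \<tau> where "\<tau> = t + h"
    have \<tau>T: "\<tau> \<in> {0..T}" using h tT unfolding \<tau>_def by auto
    obtain yh where yh: "yh \<in> {-pi..pi}" "a \<tau> yh = MM \<tau>" using MM_att[OF \<tau>T] by blast
    obtain ys where ys: "ys \<in> {-pi..pi}" "a t ys = MM t" using MM_att[OF tT] by blast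
    have ht: "\<bar>\<tau> - t\<bar> = h" "\<bar>t - \<tau>\<bar> = h" using h unfolding \<tau>_def by auto
    have "\<bar>a \<tau> ys - a t ys\<bar> \<le> Kat * h" using lip[OF \<tau>T tT ys(1)] ht(1) by simp
    then have "a \<tau> ys \<ge> MM t - Kat * h" using ys(2) by linarith
    then have "MM \<tau> \<ge> MM t - Kat * h" using MM_ge[OF \<tau>T ys(1)] by linarith
    moreover have "a t yh \<ge> a \<tau> yh - Kat * h"
    proof -
      have "\<bar>a t yh - a \<tau> yh\<bar> \<le> Kat * h" using lip[OF tT \<tau>T yh(1)] ht(2) by simp
      then show ?thesis by linarith
    qed
    ultimately have low: "a t yh \<ge> MM t - 2 * Kat * h" using yh(2) by linarith
    have "h * (2 * Kat + 1) < \<eta>"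
    proof -
      have "h < \<eta> / (2 * Kat + 1)" using h unfolding \<delta>_def by auto
      then show ?thesis using Kat_nonneg by (simp add: field_simps)
    qed
    then have "2 * Kat * h < \<eta>" using h by (simp add: algebra_simps)
    then have "a t yh > MM t - \<eta>" using low by linarith
    then have c1: "a_at t yh < c" using \<eta>(2) yh(1) by blast
    obtain \<xi> where \<xi>: "\<xi> \<in> {t..\<tau>}" "a \<tau> yh - a t yh = a_at \<xi> yh * (\<tau> - t)"
    proof -
      have "\<exists>\<xi>\<in>{t..\<tau>}. a \<tau> yh - a t yh = a_at \<xi> yh * (\<tau> - t)"
      proof (rule mvt_real[where f="\<lambda>s. a s yh"])
        show "t \<le> \<tau>" using h unfolding \<tau>_def by simp
        fix s assume "s \<in> {t..\<tau>}"
        then have sT: "s \<in> {0..T}" using tT \<tau>T by auto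
        show "((\<lambda>s. a s yh) has_real_derivative a_at s yh) (at s within {t..\<tau>})"
          by (rule DERIV_subset[OF Dt[OF sT yh(1)]]) (use tT \<tau>T in auto)
      qed
      then show ?thesis using that by blast
    qed
    have \<xi>T: "\<xi> \<in> {0..T}" using \<xi>(1) tT \<tau>T by auto
    have "\<bar>\<xi> - t\<bar> < \<delta>1" using \<xi>(1) h unfolding \<tau>_def \<delta>_def by auto
    then have "\<bar>a_at \<xi> yh - a_at t yh\<bar> < e/2" using \<delta>1(2) \<xi>T tT yh(1) by blast
    then have "a_at \<xi> yh < a_at t yh + e/2" by linarith
    then have "a_at \<xi> yh < (MM t)^2 - II t + e" using c1 unfolding c_def by linarith
    then have "a_at \<xi> yh * h \<le> ((MM t)^2 - II t + e) * h" using h by (simp add: mult_right_mono)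
    moreover have "a t yh \<le> MM t" by (rule MM_ge[OF tT yh(1)])
    moreover have "\<tau> - t = h" unfolding \<tau>_def by simp
    ultimately show "MM (t + h) \<le> MM t + h * ((MM t)^2 - II t + e)"
      using \<xi>(2) yh(2) unfolding \<tau>_def by (simp add: algebra_simps)
  qed
qed

lemma mstep:
  assumes t: "t \<in> {0..<T}" and e: "e > 0"
  shows "\<exists>\<delta>>0. \<forall>h. 0 < h \<and> h < \<delta> \<and> t + h \<le> T \<longrightarrow> a (t+h) (xs (t+h)) \<ge> a t (xs t) + h * ((a t (xs t))^2 - II t - e)"
proof -
  have tT: "t \<in> {0..T}" using t by auto
  obtain \<delta> where \<delta>: "\<delta> > 0" "\<forall>y\<in>{0..T}. \<bar>y - t\<bar> < \<delta> \<longrightarrow> \<bar>a y (xs y) - a t (xs t) - ((a t (xs t))^2 - II t) * (y - t)\<bar> \<le> e * \<bar>y - t\<bar>"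
    using deriv_step[OF Dm[OF tT] e] by blast
  show ?thesis
  proof (intro exI[of _ \<delta>] conjI allI impI)
    fix h assume h: "0 < h \<and> h < \<delta> \<and> t + h \<le> T"
    then have "t + h \<in> {0..T}" "\<bar>t + h - t\<bar> < \<delta>" using tT by auto
    then have "\<bar>a (t+h) (xs (t+h)) - a t (xs t) - ((a t (xs t))^2 - II t) * h\<bar> \<le> e * h"
      using \<delta>(2) h by fastforce
    then show "a (t+h) (xs (t+h)) \<ge> a t (xs t) + h * ((a t (xs t))^2 - II t - e)"
      by (simp add: algebra_simps abs_le_iff)
  qed (use \<delta> in auto)
qed

lemma MM_eq: "t \<in> {0..T} \<Longrightarrow> MM t = a t (xs t)"
proof -
  define d where "d s = MM s - a s (xs s)" for s
  have xin: "xs s \<in> {-pi..pi}" if "s \<in> {0..T}" for s using inside[OF that] by auto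
  have cm: "continuous_on {0..T} (\<lambda>s. a s (xs s))"
    unfolding continuous_on_eq_continuous_within using Dm DERIV_continuous by blast
  have cd: "continuous_on {0..T} d" unfolding d_def by (intro continuous_intros cMM cm)
  have d0: "d 0 \<le> 0"
  proof -
    obtain y where y: "y \<in> {-pi..pi}" "a 0 y = MM 0" using MM_att[OF T0] by blast
    have "a 0 y \<le> a 0 x0" using max0 y(1) by blast
    then have "MM 0 \<le> a 0 x0" using y(2) by simp
    then show ?thesis unfolding d_def using char0 by simp
  qed
  have nonneg: "\<forall>s\<in>{0..T}. d s \<ge> 0" unfolding d_def using MM_ge xin by auto
  have step: "\<exists>\<delta>>0. \<forall>h. 0 < h \<and> h < \<delta> \<and> s + h \<le> T \<longrightarrow> d (s+h) \<le> d s + h * (2 * Ka * d s + e)"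
    if s: "s \<in> {0..<T}" and e: "e > 0" for s e
  proof -
    have sT: "s \<in> {0..T}" using s by auto
    obtain \<delta>1 where \<delta>1: "\<delta>1 > 0" "\<forall>h. 0 < h \<and> h < \<delta>1 \<and> s + h \<le> T \<longrightarrow> MM (s+h) \<le> MM s + h * ((MM s)^2 - II s + e/2)"
      using Mstep[OF s, of "e/2"] e by auto
    obtain \<delta>2 where \<delta>2: "\<delta>2 > 0" "\<forall>h. 0 < h \<and> h < \<delta>2 \<and> s + h \<le> T \<longrightarrow> a (s+h) (xs (s+h)) \<ge> a s (xs s) + h * ((a s (xs s))^2 - II s - e/2)"
      using mstep[OF s, of "e/2"] e by auto
    show ?thesis
    proof (intro exI[of _ "min \<delta>1 \<delta>2"] conjI allI impI)
      show "min \<delta>1 \<delta>2 > 0" using \<delta>1 \<delta>2 by simp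
      fix h assume h: "0 < h \<and> h < min \<delta>1 \<delta>2 \<and> s + h \<le> T"
      have A: "MM (s+h) \<le> MM s + h * ((MM s)^2 - II s + e/2)" using \<delta>1(2) h by auto
      have B: "a (s+h) (xs (s+h)) \<ge> a s (xs s) + h * ((a s (xs s))^2 - II s - e/2)" using \<delta>2(2) h by auto
      define Ms where "Ms = MM s"
      define ms where "ms = a s (xs s)"
      have bM: "\<bar>Ms\<bar> \<le> Ka" unfolding Ms_def by (rule MM_bound[OF sT])
      have bm: "\<bar>ms\<bar> \<le> Ka" unfolding ms_def by (rule Ka[OF sT xin[OF sT]])
      have ds: "d s = Ms - ms" unfolding d_def Ms_def ms_def by simp
      have "d s \<ge> 0" using nonneg sT by blast
      then have dpos: "Ms - ms \<ge> 0" using ds by simp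
      have "Ms^2 - ms^2 = (Ms + ms) * (Ms - ms)" by (simp add: algebra_simps power2_eq_square)
      also have "\<dots> \<le> (2 * Ka) * (Ms - ms)" by (rule mult_right_mono) (use bM bm dpos in auto)
      finally have sq: "Ms^2 - ms^2 \<le> 2 * Ka * (Ms - ms)" .
      have "d (s+h) \<le> Ms + h * (Ms^2 - II s + e/2) - (ms + h * (ms^2 - II s - e/2))"
        unfolding d_def Ms_def ms_def by (rule diff_mono[OF A B])
      also have "\<dots> = (Ms - ms) + h * (Ms^2 - ms^2 + e)" by (simp add: algebra_simps)
      also have "\<dots> \<le> (Ms - ms) + h * (2 * Ka * (Ms - ms) + e)"
        using sq h by (simp add: mult_left_mono)
      finally show "d (s+h) \<le> d s + h * (2 * Ka * d s + e)" using ds by simp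
    qed
  qed
  have "\<forall>s\<in>{0..T}. d s \<le> 0"
    by (rule dini_zero[OF cd d0 _ nonneg step]) (use Ka_nonneg in auto)
  moreover assume "t \<in> {0..T}"
  ultimately show ?thesis using nonneg unfolding d_def by force
qed

lemma part1:
  assumes t: "t \<in> {0..T}"
  shows "xs t \<in> {-pi..pi}" "\<forall>x\<in>{-pi..pi}. a t x \<le> a t (xs t)" "a_ax t (xs t) = 0"
proof -
  show "xs t \<in> {-pi..pi}" using inside[OF t] by auto
  show mx: "\<forall>x\<in>{-pi..pi}. a t x \<le> a t (xs t)" using MM_ge[OF t] MM_eq[OF t] by auto
  show "a_ax t (xs t) = 0"
    by (rule fermat_int[OF Dx[OF t] inside[OF t] mx]) (use inside[OF t] in auto)
qed

end

context csetting
begin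

lemma margin: "\<exists>\<delta>0>0. \<forall>t\<in>{0..T}. -pi + \<delta>0 \<le> xs t \<and> xs t \<le> pi - \<delta>0"
proof -
  have ne: "{0..T} \<noteq> {}" using T by auto
  obtain t1 where t1: "t1 \<in> {0..T}" "\<forall>t\<in>{0..T}. xs t \<le> xs t1"
    using continuous_attains_sup[OF compact_Icc ne cxs] by blast
  obtain t2 where t2: "t2 \<in> {0..T}" "\<forall>t\<in>{0..T}. xs t2 \<le> xs t"
    using continuous_attains_inf[OF compact_Icc ne cxs] by blast
  show ?thesis
  proof (intro exI[of _ "min (pi - xs t1) (xs t2 + pi)"] conjI ballI)
    show "0 < min (pi - xs t1) (xs t2 + pi)" using inside[OF t1(1)] inside[OF t2(1)] by auto
    fix t assume t: "t \<in> {0..T}"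
    show "-pi + min (pi - xs t1) (xs t2 + pi) \<le> xs t" using t2(2) t by fastforce
    show "xs t \<le> pi - min (pi - xs t1) (xs t2 + pi)" using t1(2) t by fastforce
  qed
qed

definition "d0 = (SOME \<delta>0. \<delta>0 > 0 \<and> (\<forall>t\<in>{0..T}. -pi + \<delta>0 \<le> xs t \<and> xs t \<le> pi - \<delta>0))"

lemma d0: "d0 > 0" "t \<in> {0..T} \<Longrightarrow> -pi + d0 \<le> xs t" "t \<in> {0..T} \<Longrightarrow> xs t \<le> pi - d0"
  using someI_ex[OF margin] unfolding d0_def by auto

lemma shift_in: "t \<in> {0..T} \<Longrightarrow> \<bar>k\<bar> < d0 \<Longrightarrow> xs t + k \<in> {-pi..pi}"
  using d0(2,3)[of t] by (auto simp: abs_less_iff)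

lemma xs_in: "t \<in> {0..T} \<Longrightarrow> xs t \<in> {-pi..pi}"
  using inside by fastforce

lemma E1:
  assumes e: "\<epsilon> > 0"
  shows "\<exists>\<delta>>0. \<delta> \<le> d0 \<and> (\<forall>\<tau>\<in>{0..T}. \<forall>k. \<bar>k\<bar> < \<delta> \<longrightarrow> \<bar>a_ax \<tau> (xs \<tau> + k) - a_axx \<tau> (xs \<tau>) * k\<bar> \<le> \<epsilon> * \<bar>k\<bar>)"
proof -
  obtain du where du: "du > 0" "\<forall>t\<in>{0..T}. \<forall>x\<in>{-pi..pi}. \<forall>y\<in>{-pi..pi}. \<bar>x - y\<bar> < du \<longrightarrow> \<bar>a_axx t x - a_axx t y\<bar> < \<epsilon>"
    using unif_x[OF caxx e] by blast
  show ?thesis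
  proof (intro exI[of _ "min d0 du"] conjI ballI allI impI)
    show "min d0 du > 0" using d0(1) du(1) by simp
    show "min d0 du \<le> d0" by simp
    fix \<tau> k assume \<tau>: "\<tau> \<in> {0..T}" and k: "\<bar>k\<bar> < min d0 du"
    define X where "X = xs \<tau>"
    have X: "X \<in> {-pi..pi}" unfolding X_def by (rule xs_in[OF \<tau>])
    have Xk: "X + k \<in> {-pi..pi}" unfolding X_def by (rule shift_in[OF \<tau>]) (use k in auto)
    obtain \<zeta> where z: "\<bar>\<zeta> - X\<bar> \<le> \<bar>X + k - X\<bar>" "\<zeta> \<in> {-pi..pi}" "a_ax \<tau> (X + k) - a_ax \<tau> X = a_axx \<tau> \<zeta> * (X + k - X)"
      using mvt_sym[where f="a_ax \<tau>" and f'="a_axx \<tau>", OF Dxx[OF \<tau>] X Xk] by blast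
    have ax0: "a_ax \<tau> X = 0" unfolding X_def by (rule part1(3)[OF \<tau>])
    have "\<bar>\<zeta> - X\<bar> < du" using z(1) k by simp
    then have "\<bar>a_axx \<tau> \<zeta> - a_axx \<tau> X\<bar> < \<epsilon>" using du(2) \<tau> z(2) X by blast
    moreover have "a_ax \<tau> (X + k) - a_axx \<tau> X * k = (a_axx \<tau> \<zeta> - a_axx \<tau> X) * k" using z(3) ax0 by (simp add: algebra_simps)
    ultimately have "\<bar>a_ax \<tau> (X + k) - a_axx \<tau> X * k\<bar> \<le> \<epsilon> * \<bar>k\<bar>"
      by (simp add: abs_mult mult_right_mono)
    then show "\<bar>a_ax \<tau> (xs \<tau> + k) - a_axx \<tau> (xs \<tau>) * k\<bar> \<le> \<epsilon> * \<bar>k\<bar>" unfolding X_def .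
  qed
qed

lemma E2:
  assumes \<tau>: "\<tau> \<in> {0..T}" and hd: "\<bar>h\<bar> < d0"
    and E: "\<forall>k. \<bar>k\<bar> \<le> \<bar>h\<bar> \<longrightarrow> \<bar>a_ax \<tau> (xs \<tau> + k) - a_axx \<tau> (xs \<tau>) * k\<bar> \<le> \<epsilon> * \<bar>k\<bar>"
    and e: "\<epsilon> \<ge> 0"
  shows "\<bar>a \<tau> (xs \<tau> + h) - a \<tau> (xs \<tau>) - a_axx \<tau> (xs \<tau>) * h^2 / 2\<bar> \<le> \<epsilon> * h^2"
proof -
  define X where "X = xs \<tau>"
  define q where "q = a_axx \<tau> X"
  have X: "X \<in> {-pi..pi}" unfolding X_def by (rule xs_in[OF \<tau>])
  have Xh: "X + h \<in> {-pi..pi}" unfolding X_def by (rule shift_in[OF \<tau> hd])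
  define f where "f y = a \<tau> y - q * (y - X)^2 / 2" for y
  define f' where "f' y = a_ax \<tau> y - q * (y - X)" for y
  have Df: "(f has_real_derivative f' y) (at y within {-pi..pi})" if "y \<in> {-pi..pi}" for y
    unfolding f_def[abs_def] f'_def
    by (rule derivative_eq_intros Dx[OF \<tau> that] refl | simp)+
  obtain \<zeta> where z: "\<bar>\<zeta> - X\<bar> \<le> \<bar>X + h - X\<bar>" "\<zeta> \<in> {-pi..pi}" "f (X + h) - f X = f' \<zeta> * (X + h - X)"
    using mvt_sym[where f=f and f'=f', OF Df X Xh] by blast
  define k where "k = \<zeta> - X"
  have kh: "\<bar>k\<bar> \<le> \<bar>h\<bar>" using z(1) unfolding k_def by simp
  have "\<bar>f' \<zeta>\<bar> \<le> \<epsilon> * \<bar>k\<bar>"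
    using E kh unfolding f'_def k_def X_def q_def by auto
  also have "\<dots> \<le> \<epsilon> * \<bar>h\<bar>" using kh e by (simp add: mult_left_mono)
  finally have "\<bar>f' \<zeta> * h\<bar> \<le> \<epsilon> * \<bar>h\<bar> * \<bar>h\<bar>" by (simp add: abs_mult mult_right_mono)
  moreover have "\<bar>h\<bar> * \<bar>h\<bar> = h^2" by (simp add: power2_eq_square abs_mult[symmetric])
  moreover have "f (X + h) - f X = a \<tau> (X + h) - a \<tau> X - q * h^2 / 2" unfolding f_def by simp
  ultimately show ?thesis using z(3) unfolding X_def[symmetric] q_def[symmetric] by (simp add: mult.assoc)
qed

lemma E3:
  assumes e: "\<epsilon> > 0"
  shows "\<exists>\<delta>>0. \<delta> \<le> d0 \<and> (\<forall>\<tau>\<in>{0..T}. \<forall>h. \<bar>h\<bar> < \<delta> \<longrightarrow>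
     \<bar>vv \<tau> (xs \<tau> + h) - vv \<tau> (xs \<tau>) - a \<tau> (xs \<tau>) * h\<bar> \<le> \<epsilon> * \<bar>h\<bar> \<and> \<bar>a \<tau> (xs \<tau> + h) - a \<tau> (xs \<tau>)\<bar> \<le> \<epsilon>)"
proof -
  obtain du where du: "du > 0" "\<forall>t\<in>{0..T}. \<forall>x\<in>{-pi..pi}. \<forall>y\<in>{-pi..pi}. \<bar>x - y\<bar> < du \<longrightarrow> \<bar>a t x - a t y\<bar> < \<epsilon>"
    using unif_x[OF ca e] by blast
  show ?thesis
  proof (intro exI[of _ "min d0 du"] conjI ballI allI impI)
    show "min d0 du > 0" using d0(1) du(1) by simp
    show "min d0 du \<le> d0" by simp
    fix \<tau> h assume \<tau>: "\<tau> \<in> {0..T}" and h: "\<bar>h\<bar> < min d0 du"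
    define X where "X = xs \<tau>"
    have X: "X \<in> {-pi..pi}" unfolding X_def by (rule xs_in[OF \<tau>])
    have Xh: "X + h \<in> {-pi..pi}" unfolding X_def by (rule shift_in[OF \<tau>]) (use h in auto)
    obtain \<zeta> where z: "\<bar>\<zeta> - X\<bar> \<le> \<bar>X + h - X\<bar>" "\<zeta> \<in> {-pi..pi}" "vv \<tau> (X + h) - vv \<tau> X = a \<tau> \<zeta> * (X + h - X)"
      using mvt_sym[where f="vv \<tau>" and f'="a \<tau>", OF Dv[OF \<tau>] X Xh] by blast
    have "\<bar>\<zeta> - X\<bar> < du" using z(1) h by simp
    then have "\<bar>a \<tau> \<zeta> - a \<tau> X\<bar> < \<epsilon>" using du(2) \<tau> z(2) X by blast
    moreover have "vv \<tau> (X + h) - vv \<tau> X - a \<tau> X * h = (a \<tau> \<zeta> - a \<tau> X) * h" using z(3) by (simp add: algebra_simps)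
    ultimately have "\<bar>vv \<tau> (X + h) - vv \<tau> X - a \<tau> X * h\<bar> \<le> \<epsilon> * \<bar>h\<bar>"
      by (simp add: abs_mult mult_right_mono)
    then show "\<bar>vv \<tau> (xs \<tau> + h) - vv \<tau> (xs \<tau>) - a \<tau> (xs \<tau>) * h\<bar> \<le> \<epsilon> * \<bar>h\<bar>" unfolding X_def .
    have "\<bar>X + h - X\<bar> < du" using h by simp
    then have "\<bar>a \<tau> (X + h) - a \<tau> X\<bar> < \<epsilon>" using du(2) \<tau> Xh X by blast
    then show "\<bar>a \<tau> (xs \<tau> + h) - a \<tau> (xs \<tau>)\<bar> \<le> \<epsilon>" unfolding X_def by simp
  qed
qed

lemma DG:
  assumes \<tau>: "\<tau> \<in> {0..T}" and hd: "\<bar>h\<bar> < d0"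
  shows "((\<lambda>s. a s (xs s + h) - a s (xs s)) has_real_derivative
     (a \<tau> (xs \<tau> + h))^2 - (a \<tau> (xs \<tau>))^2 - a_ax \<tau> (xs \<tau> + h) * (vv \<tau> (xs \<tau> + h) - vv \<tau> (xs \<tau>))) (at \<tau> within {0..T})"
proof -
  have dxs: "(xs has_real_derivative vv \<tau> (xs \<tau>)) (at \<tau> within {0..T})"
    using char \<tau> unfolding vv_def by blast
  have dxsh: "((\<lambda>s. xs s + h) has_real_derivative vv \<tau> (xs \<tau>)) (at \<tau> within {0..T})"
    using DERIV_add[OF dxs DERIV_const[of h]] by simp
  have r1: "(\<lambda>s. xs s + h) ` {0..T} \<subseteq> {-pi..pi}" using shift_in hd by auto
  have r2: "xs ` {0..T} \<subseteq> {-pi..pi}" using xs_in by auto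
  have D1: "((\<lambda>s. a s (xs s + h)) has_real_derivative (a_at \<tau> (xs \<tau> + h) + a_ax \<tau> (xs \<tau> + h) * vv \<tau> (xs \<tau>))) (at \<tau> within {0..T})"
    using chain_rect[where f=a and ft=a_at and fx=a_ax and y="\<lambda>s. xs s + h", OF Dt Dx cax \<tau> dxsh r1] by simp
  have D2: "((\<lambda>s. a s (xs s)) has_real_derivative (a_at \<tau> (xs \<tau>) + a_ax \<tau> (xs \<tau>) * vv \<tau> (xs \<tau>))) (at \<tau> within {0..T})"
    using chain_rect[where f=a and ft=a_at and fx=a_ax and y=xs, OF Dt Dx cax \<tau> dxs r2] by simp
  have e1: "a_at \<tau> (xs \<tau> + h) = (a \<tau> (xs \<tau> + h))^2 - II \<tau> - vv \<tau> (xs \<tau> + h) * a_ax \<tau> (xs \<tau> + h)"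
    by (rule pde'[OF \<tau> shift_in[OF \<tau> hd]])
  have e2: "a_at \<tau> (xs \<tau>) = (a \<tau> (xs \<tau>))^2 - II \<tau> - vv \<tau> (xs \<tau>) * a_ax \<tau> (xs \<tau>)"
    by (rule pde'[OF \<tau> xs_in[OF \<tau>]])
  have "(a_at \<tau> (xs \<tau> + h) + a_ax \<tau> (xs \<tau> + h) * vv \<tau> (xs \<tau>)) - (a_at \<tau> (xs \<tau>) + a_ax \<tau> (xs \<tau>) * vv \<tau> (xs \<tau>))
     = (a \<tau> (xs \<tau> + h))^2 - (a \<tau> (xs \<tau>))^2 - a_ax \<tau> (xs \<tau> + h) * (vv \<tau> (xs \<tau> + h) - vv \<tau> (xs \<tau>))"
    unfolding e1 e2 by (simp add: algebra_simps)
  with DERIV_diff[OF D1 D2] show ?thesis by simp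
qed

end

lemma half_le: "(x::real) / 2 \<le> r \<Longrightarrow> x \<le> 2 * r" by linarith

context csetting
begin

lemma q_bound:
  assumes t: "t \<in> {0..T}" and e: "0 < \<epsilon>" "\<epsilon> \<le> 1"
  shows "\<bar>a_axx t (xs t) - a_axx 0 (xs 0)\<bar> \<le> 2 * \<epsilon> * (2 + (2 * Kaxx + 3 * Ka + 2) * T)"
proof -
  obtain \<delta>1 where \<delta>1: "\<delta>1 > 0" "\<delta>1 \<le> d0" "\<forall>\<tau>\<in>{0..T}. \<forall>k. \<bar>k\<bar> < \<delta>1 \<longrightarrow> \<bar>a_ax \<tau> (xs \<tau> + k) - a_axx \<tau> (xs \<tau>) * k\<bar> \<le> \<epsilon> * \<bar>k\<bar>"
    using E1[OF e(1)] by blast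
  obtain \<delta>3 where \<delta>3: "\<delta>3 > 0" "\<delta>3 \<le> d0" "\<forall>\<tau>\<in>{0..T}. \<forall>h. \<bar>h\<bar> < \<delta>3 \<longrightarrow>
     \<bar>vv \<tau> (xs \<tau> + h) - vv \<tau> (xs \<tau>) - a \<tau> (xs \<tau>) * h\<bar> \<le> \<epsilon> * \<bar>h\<bar> \<and> \<bar>a \<tau> (xs \<tau> + h) - a \<tau> (xs \<tau>)\<bar> \<le> \<epsilon>"
    using E3[OF e(1)] by blast
  define h where "h = min \<delta>1 \<delta>3 / 2"
  have h: "h > 0" "h < \<delta>1" "h < \<delta>3" "h < d0" using \<delta>1 \<delta>3 unfolding h_def by auto
  define K2 where "K2 = 2 * Kaxx + 3 * Ka + 2"
  have K2pos: "K2 \<ge> 0" unfolding K2_def using Kaxx[OF T0 X0] Ka_nonneg by linarith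
  define G where "G s = a s (xs s + h) - a s (xs s)" for s
  define G' where "G' \<tau> = (a \<tau> (xs \<tau> + h))^2 - (a \<tau> (xs \<tau>))^2 - a_ax \<tau> (xs \<tau> + h) * (vv \<tau> (xs \<tau> + h) - vv \<tau> (xs \<tau>))" for \<tau>
  have habs: "\<bar>h\<bar> = h" using h by simp
  have E1h: "\<forall>k. \<bar>k\<bar> \<le> \<bar>h\<bar> \<longrightarrow> \<bar>a_ax \<tau> (xs \<tau> + k) - a_axx \<tau> (xs \<tau>) * k\<bar> \<le> \<epsilon> * \<bar>k\<bar>" if "\<tau> \<in> {0..T}" for \<tau>
    using \<delta>1(3) that h habs by auto
  have E2h: "\<bar>G \<tau> - a_axx \<tau> (xs \<tau>) * h^2 / 2\<bar> \<le> \<epsilon> * h^2" if \<tau>: "\<tau> \<in> {0..T}" for \<tau>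
    using E2[OF \<tau> _ E1h[OF \<tau>]] h e unfolding G_def by auto
  have G'b: "\<bar>G' \<tau>\<bar> \<le> \<epsilon> * h^2 * K2" if \<tau>: "\<tau> \<in> {0..T}" for \<tau>
  proof -
    define X where "X = xs \<tau>"
    define q where "q = a_axx \<tau> X"
    define M where "M = a \<tau> X"
    define A where "A = a \<tau> (X + h) - M"
    define e1 where "e1 = a_ax \<tau> (X + h) - q * h"
    define e2 where "e2 = A - q * h^2 / 2"
    define e3 where "e3 = vv \<tau> (X + h) - vv \<tau> X - M * h"
    have b1: "\<bar>e1\<bar> \<le> \<epsilon> * \<bar>h\<bar>" using E1h[OF \<tau>] unfolding e1_def q_def X_def by auto
    have b2: "\<bar>e2\<bar> \<le> \<epsilon> * h^2" using E2h[OF \<tau>] unfolding e2_def A_def M_def q_def X_def G_def by simp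
    have hh: "\<bar>h\<bar> < \<delta>3" using h habs by simp
    have b3: "\<bar>e3\<bar> \<le> \<epsilon> * \<bar>h\<bar>" and bA: "\<bar>A\<bar> \<le> \<epsilon>"
      using \<delta>3(3)[rule_format, OF \<tau> hh] unfolding e3_def A_def M_def X_def by auto
    have Aeq: "A = q * h^2 / 2 + e2" unfolding e2_def by simp
    have bq: "\<bar>q\<bar> \<le> Kaxx" unfolding q_def X_def by (rule Kaxx[OF \<tau> xs_in[OF \<tau>]])
    have bM: "\<bar>M\<bar> \<le> Ka" unfolding M_def X_def by (rule Ka[OF \<tau> xs_in[OF \<tau>]])
    have "\<bar>A * (A + 2 * M) - (q * h + e1) * (M * h + e3)\<bar> \<le> \<epsilon> * h^2 * (2 * Kaxx + 3 * Ka + 2)"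
      by (rule alg_bound[OF b1 b2 b3 bA Aeq bq bM]) (use e in auto)
    moreover have "A * (A + 2 * M) - (q * h + e1) * (M * h + e3) = G' \<tau>"
      unfolding G'_def A_def e1_def e3_def X_def[symmetric] M_def by (simp add: algebra_simps power2_eq_square)
    ultimately show ?thesis unfolding K2_def by simp
  qed
  have DGt: "(G has_real_derivative G' \<tau>) (at \<tau> within {0..t})" if "\<tau> \<in> {0..t}" for \<tau>
  proof -
    have \<tau>T: "\<tau> \<in> {0..T}" using that t by auto
    show ?thesis unfolding G_def[abs_def] G'_def
      by (rule DERIV_subset[OF DG[OF \<tau>T]]) (use h t in auto)
  qed
  obtain \<xi> where \<xi>: "\<xi> \<in> {0..t}" "G t - G 0 = G' \<xi> * (t - 0)"
    using mvt_real[of 0 t G G'] DGt t by auto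
  have \<xi>T: "\<xi> \<in> {0..T}" using \<xi>(1) t by auto
  have "\<bar>G t - G 0\<bar> \<le> \<epsilon> * h^2 * K2 * T"
  proof -
    have "\<bar>G t - G 0\<bar> = \<bar>G' \<xi>\<bar> * t" using \<xi>(2) t by (simp add: abs_mult)
    also have "\<dots> \<le> (\<epsilon> * h^2 * K2) * T" by (rule mult_mono[OF G'b[OF \<xi>T]]) (use t e K2pos in auto)
    finally show ?thesis .
  qed
  moreover have "\<bar>G t - a_axx t (xs t) * h^2 / 2\<bar> \<le> \<epsilon> * h^2" by (rule E2h[OF t])
  moreover have "\<bar>G 0 - a_axx 0 (xs 0) * h^2 / 2\<bar> \<le> \<epsilon> * h^2" by (rule E2h[OF T0])
  ultimately have "\<bar>(a_axx t (xs t) - a_axx 0 (xs 0)) * h^2 / 2\<bar> \<le> \<epsilon> * h^2 * K2 * T + 2 * (\<epsilon> * h^2)"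
    by (simp add: algebra_simps abs_le_iff)
  moreover have "\<bar>(a_axx t (xs t) - a_axx 0 (xs 0)) * h^2 / 2\<bar> = \<bar>a_axx t (xs t) - a_axx 0 (xs 0)\<bar> * h^2 / 2"
    by (simp add: abs_mult)
  ultimately have a0: "\<bar>a_axx t (xs t) - a_axx 0 (xs 0)\<bar> * h^2 / 2 \<le> \<epsilon> * h^2 * K2 * T + 2 * (\<epsilon> * h^2)"
    by simp
  have a1: "\<bar>a_axx t (xs t) - a_axx 0 (xs 0)\<bar> * h^2 \<le> 2 * (\<epsilon> * h^2 * K2 * T + 2 * (\<epsilon> * h^2))"
    by (rule half_le[OF a0])
  have "2 * (\<epsilon> * h^2 * K2 * T + 2 * (\<epsilon> * h^2)) = (2 * \<epsilon> * (2 + K2 * T)) * h^2"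
    by (simp add: algebra_simps)
  with a1 have "\<bar>a_axx t (xs t) - a_axx 0 (xs 0)\<bar> * h^2 \<le> (2 * \<epsilon> * (2 + K2 * T)) * h^2"
    by simp
  then show ?thesis unfolding K2_def using h by simp
qed

lemma q_const:
  assumes t: "t \<in> {0..T}"
  shows "a_axx t (xs t) = a_axx 0 x0"
proof (rule ccontr)
  assume ne: "a_axx t (xs t) \<noteq> a_axx 0 x0"
  define D where "D = \<bar>a_axx t (xs t) - a_axx 0 (xs 0)\<bar>"
  have Dpos: "D > 0" using ne char0 unfolding D_def by simp
  define C where "C = 2 * (2 + (2 * Kaxx + 3 * Ka + 2) * T)"
  have Cpos: "C > 0" unfolding C_def using Kaxx[OF T0 X0] Ka_nonneg T
    by (intro mult_pos_pos) (auto intro!: add_pos_nonneg mult_nonneg_nonneg)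
  define \<epsilon> where "\<epsilon> = min 1 (D / (2 * C))"
  have e: "0 < \<epsilon>" "\<epsilon> \<le> 1" unfolding \<epsilon>_def using Dpos Cpos by auto
  have "D \<le> C * \<epsilon>" using q_bound[OF t e] unfolding D_def C_def by (simp add: algebra_simps)
  also have "\<dots> \<le> C * (D / (2 * C))" unfolding \<epsilon>_def using Cpos by (intro mult_left_mono) auto
  also have "\<dots> = D / 2" using Cpos by simp
  finally show False using Dpos by simp
qed

end

theorem corollary2p6:
  fixes T x0 :: real
    and a a_at a_ax a_att a_atx a_axt a_axx :: "real \<Rightarrow> real \<Rightarrow> real"
    and xs :: "real \<Rightarrow> real"
  assumes T: "0 < T"
    and reg: "C2_rect T a a_at a_ax a_att a_atx a_axt a_axx"
    and pde: "\<forall>t\<in>{0..T}. \<forall>x\<in>{-pi..pi}.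
                a_at t x + integral {-pi..x} (a t) * a_ax t x - (a t x)^2
                + (1/pi) * integral {-pi..pi} (\<lambda>y. (a t y)^2) = 0"
    and mean0: "\<forall>t\<in>{0..T}. integral {-pi..pi} (a t) = 0"
    and x0: "x0 \<in> {-pi<..<pi}"
    and max0: "\<forall>x\<in>{-pi..pi}. a 0 x \<le> a 0 x0"
    and char: "\<forall>t\<in>{0..T}. (xs has_real_derivative integral {-pi..xs t} (a t)) (at t within {0..T})"
    and char0: "xs 0 = x0"
  shows "\<forall>t\<in>{0..T}. xs t \<in> {-pi..pi} \<and> (\<forall>x\<in>{-pi..pi}. a t x \<le> a t (xs t))
           \<and> a_ax t (xs t) = 0 \<and> a_axx t (xs t) = a_axx 0 x0"
  proof -
  interpret csetting T x0 a a_at a_ax a_att a_atx a_axt a_axx xs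
    by (rule csetting.intro[OF T reg pde mean0 x0 max0 char char0])
  show ?thesis using part1 q_const by blast
qed

end
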